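(* Let $\alpha,\beta>0$ and set $a=\frac{1}{1+\alpha}$, $\theta=\frac{\beta}{1+\alpha}$. For every $n\ge1$, the random partition of $\{1,\dots,n\}$ produced at time $n$ by the Chinese restaurant process with parameters $a$ and $\theta$ has the same distribution as the partition of $\{1,\dots,n\}$ into the label sets of the branches (subtrees rooted at the children of the root) of the random tree with $n+1$ nodes produced by the growth process of the family $\mathcal{T}_{\alpha,\beta}$.
   Context: Chinese restaurant process with parameters $0<a<1$, $\theta>-a$: at time $1$ the partition is $\{\{1\}\}$. Given a partition of $\{1,\dots,n\}$ with $k$ blocks $t_1,\dots,t_k$, element $n+1$ is added to block $t_i$ with probability $\frac{|t_i|-a}{n+\theta}$, and forms a new singleton block with probability $\frac{\theta+ka}{n+\theta}$. Growth process of $\mathcal{T}_{\alpha,\beta}$ (generalized plane recursive trees with root weight $(1-t)^{-\beta}$ and non-root weight $(1-t)^{-\alpha}$): start with a single root labelled $0$; at step $n+1$ ($n\ge0$), when the current tree has nodes $0,1,\dots,n$, the new node labelled $n+1$ is attached as a child to a non-root node $v$ with probability $\frac{d(v)+\alpha}{\beta+(\alpha+1)n}$ and to the root with probability $\frac{d(\mathrm{root})+\beta}{\beta+(\alpha+1)n}$, where $d(v)$ is the current outdegree of $v$. *)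

theory Defs
  imports "HOL-Probability.Probability_Mass_Function"
begin

definition crp_step_density :: "real \<Rightarrow> real \<Rightarrow> nat \<Rightarrow> nat set set \<Rightarrow> nat set set \<Rightarrow> real" where
  "crp_step_density a \<theta> n P Q =
     (\<Sum>t\<in>P. if Q = insert (insert (Suc n) t) (P - {t})
               then (real (card t) - a) / (real n + \<theta>) else 0)
     + (if Q = insert {Suc n} P then (\<theta> + real (card P) * a) / (real n + \<theta>) else 0)"

definition crp_step :: "real \<Rightarrow> real \<Rightarrow> nat \<Rightarrow> nat set set \<Rightarrow> nat set set pmf" where
  "crp_step a \<theta> n P = embed_pmf (crp_step_density a \<theta> n P)"

fun crp :: "real \<Rightarrow> real \<Rightarrow> nat \<Rightarrow> nat set set pmf" where
  "crp a \<theta> 0 = return_pmf {}"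
| "crp a \<theta> (Suc 0) = return_pmf {{1}}"
| "crp a \<theta> (Suc (Suc n)) = crp a \<theta> (Suc n) \<bind> crp_step a \<theta> (Suc n)"

text \<open>A tree on nodes {0..n} (root 0) is represented by its parent function
  par :: nat \<Rightarrow> nat, where par i is the parent of node i for 1 \<le> i \<le> n, and
  par i = 0 for all other i (normalisation). The plane ordering of children is
  irrelevant for the branch partition and is not recorded.\<close>

definition outdeg :: "nat \<Rightarrow> (nat \<Rightarrow> nat) \<Rightarrow> nat \<Rightarrow> nat" where
  "outdeg n par v = card {i \<in> {1..n}. par i = v}"

definition tree_step_density :: "real \<Rightarrow> real \<Rightarrow> nat \<Rightarrow> (nat \<Rightarrow> nat) \<Rightarrow> (nat \<Rightarrow> nat) \<Rightarrow> real" where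
  "tree_step_density \<alpha> \<beta> n par par' =
     (\<Sum>v\<in>{0..n}. if par' = par(Suc n := v)
        then (real (outdeg n par v) + (if v = 0 then \<beta> else \<alpha>)) / (\<beta> + (\<alpha> + 1) * real n)
        else 0)"

definition tree_step :: "real \<Rightarrow> real \<Rightarrow> nat \<Rightarrow> (nat \<Rightarrow> nat) \<Rightarrow> (nat \<Rightarrow> nat) pmf" where
  "tree_step \<alpha> \<beta> n par = embed_pmf (tree_step_density \<alpha> \<beta> n par)"

fun growth :: "real \<Rightarrow> real \<Rightarrow> nat \<Rightarrow> (nat \<Rightarrow> nat) pmf" where
  "growth \<alpha> \<beta> 0 = return_pmf (\<lambda>_. 0)"
| "growth \<alpha> \<beta> (Suc n) = growth \<alpha> \<beta> n \<bind> tree_step \<alpha> \<beta> n"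

definition branch_partition :: "nat \<Rightarrow> (nat \<Rightarrow> nat) \<Rightarrow> nat set set" where
  "branch_partition n par =
     {{i \<in> {1..n}. \<exists>k. (par ^^ k) i = c} | c. c \<in> {1..n} \<and> par c = 0}"

end

theory Submission
  imports Defs
begin


definition wsum :: "('a \<Rightarrow> 'b) \<Rightarrow> ('a \<Rightarrow> real) \<Rightarrow> 'a set \<Rightarrow> 'b \<Rightarrow> real" where
  "wsum f w A x = (\<Sum>a\<in>A. if x = f a then w a else 0)"

lemma wsum_nonneg: "(\<And>a. a \<in> A \<Longrightarrow> w a \<ge> 0) \<Longrightarrow> wsum f w A x \<ge> 0"
  unfolding wsum_def by (intro sum_nonneg) auto

lemma wsum_outside: "x \<notin> f ` A \<Longrightarrow> wsum f w A x = 0"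
  unfolding wsum_def by (intro sum.neutral) auto

lemma wsum_filter:
  assumes "finite A"
  shows "(\<Sum>x\<in>{x\<in>f ` A. P x}. wsum f w A x) = (\<Sum>a\<in>A. if P (f a) then w a else 0)"
proof -
  have "(\<Sum>x\<in>{x\<in>f ` A. P x}. wsum f w A x)
      = (\<Sum>a\<in>A. \<Sum>x\<in>{x\<in>f ` A. P x}. if x = f a then w a else 0)"
    unfolding wsum_def by (rule sum.swap)
  also have "\<dots> = (\<Sum>a\<in>A. if P (f a) then w a else 0)"
    using assms by (intro sum.cong refl) (auto simp: sum.delta)
  finally show ?thesis .
qed

lemma wsum_total:
  assumes "finite A"
  shows "(\<Sum>x\<in>f ` A. wsum f w A x) = sum w A"
  using wsum_filter[OF assms, where P="\<lambda>_. True" and f=f and w=w] by simp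

lemma wsum_integral:
  assumes "finite A" "\<And>a. a \<in> A \<Longrightarrow> w a \<ge> 0" "sum w A = 1"
  shows "(\<integral>\<^sup>+x. ennreal (wsum f w A x) \<partial>count_space UNIV) = 1"
proof -
  have "(\<integral>\<^sup>+x. ennreal (wsum f w A x) \<partial>count_space UNIV)
      = (\<integral>\<^sup>+x. ennreal (wsum f w A x) * indicator (f ` A) x \<partial>count_space UNIV)"
    by (intro nn_integral_cong) (auto simp: wsum_outside split: split_indicator)
  also have "\<dots> = (\<integral>\<^sup>+x. ennreal (wsum f w A x) \<partial>count_space (f ` A))"
    by (simp add: nn_integral_count_space_indicator)
  also have "\<dots> = (\<Sum>x\<in>f ` A. ennreal (wsum f w A x))"
    using assms by (simp add: nn_integral_count_space_finite)
  also have "\<dots> = ennreal (\<Sum>x\<in>f ` A. wsum f w A x)"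
    using assms by (intro sum_ennreal wsum_nonneg) auto
  also have "\<dots> = 1" using assms wsum_total[OF assms(1), of f w] by simp
  finally show ?thesis .
qed

lemma wsum_pmf:
  assumes "finite A" "\<And>a. a \<in> A \<Longrightarrow> w a \<ge> 0" "sum w A = 1"
  shows "pmf (embed_pmf (wsum f w A)) x = wsum f w A x"
proof (rule pmf_embed_pmf)
  show "\<And>x. 0 \<le> wsum f w A x" using assms(2) by (rule wsum_nonneg)
  show "(\<integral>\<^sup>+x. ennreal (wsum f w A x) \<partial>count_space UNIV) = 1"
    by (rule wsum_integral[OF assms])
qed

lemma wsum_set:
  assumes "finite A" "\<And>a. a \<in> A \<Longrightarrow> w a \<ge> 0" "sum w A = 1"
  shows "set_pmf (embed_pmf (wsum f w A)) \<subseteq> f ` A"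
proof
  fix x assume "x \<in> set_pmf (embed_pmf (wsum f w A))"
  then have "wsum f w A x \<noteq> 0" using wsum_pmf[OF assms, of f x] by (auto simp: set_pmf_eq)
  then show "x \<in> f ` A" using wsum_outside[of x f A w] by blast
qed

lemma wsum_map:
  assumes "finite A" "\<And>a. a \<in> A \<Longrightarrow> w a \<ge> 0" "sum w A = 1"
  shows "map_pmf g (embed_pmf (wsum f w A)) = embed_pmf (wsum (g \<circ> f) w A)"
proof (rule pmf_eqI)
  fix y
  let ?M = "embed_pmf (wsum f w A)"
  have "pmf (map_pmf g ?M) y = measure ?M (g -` {y})" by (rule pmf_map)
  also have "\<dots> = measure ?M ((g -` {y}) \<inter> set_pmf ?M)" by (simp add: measure_Int_set_pmf)
  also have "\<dots> = sum (pmf ?M) ((g -` {y}) \<inter> set_pmf ?M)"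
    using wsum_set[OF assms, of f] assms(1)
    by (intro measure_measure_pmf_finite) (meson finite_Int finite_imageI finite_subset)
  also have "\<dots> = sum (pmf ?M) {x\<in>f ` A. g x = y}"
    using wsum_set[OF assms, of f] assms(1) wsum_pmf[OF assms, of f]
    by (intro sum.mono_neutral_left) (auto simp: set_pmf_eq)
  also have "\<dots> = (\<Sum>x\<in>{x\<in>f ` A. g x = y}. wsum f w A x)"
    using wsum_pmf[OF assms, of f] by simp
  also have "\<dots> = wsum (g \<circ> f) w A y"
    unfolding wsum_filter[OF assms(1), where f=f and P="\<lambda>x. g x = y" and w=w] by (simp add: wsum_def eq_commute)
  also have "\<dots> = pmf (embed_pmf (wsum (g \<circ> f) w A)) y"
    using wsum_pmf[OF assms, of "g \<circ> f"] by simp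
  finally show "pmf (map_pmf g ?M) y = pmf (embed_pmf (wsum (g \<circ> f) w A)) y" .
qed



definition tok :: "nat \<Rightarrow> (nat \<Rightarrow> nat) \<Rightarrow> bool" where
  "tok n par \<longleftrightarrow> (\<forall>i. if i \<in> {1..n} then par i < i else par i = 0)"

definition blk :: "nat \<Rightarrow> (nat \<Rightarrow> nat) \<Rightarrow> nat \<Rightarrow> nat set" where
  "blk n par c = {i \<in> {1..n}. \<exists>k. (par ^^ k) i = c}"

definition rts :: "nat \<Rightarrow> (nat \<Rightarrow> nat) \<Rightarrow> nat set" where
  "rts n par = {c \<in> {1..n}. par c = 0}"

lemma bp_eq: "branch_partition n par = blk n par ` rts n par"
  unfolding branch_partition_def blk_def rts_def by auto

context
  fixes n par assumes T: "tok n par"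
begin

lemma tokD1: "i \<in> {1..n} \<Longrightarrow> par i < i" using T[unfolded tok_def, rule_format, of i] by simp
lemma tokD2: "i \<notin> {1..n} \<Longrightarrow> par i = 0" using T[unfolded tok_def, rule_format, of i] by simp

lemma par0: "par 0 = 0" by (rule tokD2) simp

lemma par_le: "par j \<le> j"
proof (cases "j \<in> {1..n}")
  case True then show ?thesis using tokD1[OF True] by simp
qed (simp add: tokD2)

lemma par_lt: "j \<in> {1..n} \<Longrightarrow> par j < j" by (rule tokD1)

lemma par_le_n: "par j \<le> n"
proof (cases "j \<in> {1..n}")
  case True then show ?thesis using tokD1[OF True] by simp
qed (simp add: tokD2)

lemma pow0: "(par ^^ k) 0 = 0" by (induction k) (auto simp: par0)

lemma pow_le: "(par ^^ k) i \<le> i"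
proof (induction k)
  case (Suc k)
  then show ?case using par_le[of "(par ^^ k) i"] by simp
qed simp

lemma uniq:
  assumes "(par ^^ k) i = c" "(par ^^ m) i = c'" "c \<in> rts n par" "c' \<in> rts n par"
  shows "c = c'"
proof -
  have *: "c = c'" if "(par ^^ k) i = c" "(par ^^ m) i = c'" "c' \<in> rts n par" "k \<le> m" "c \<in> rts n par" for k m c c'
  proof (cases "m = k")
    case True then show ?thesis using that by simp
  next
    case False
    define j where "j = m - k - 1"
    have j: "m = Suc j + k" using False \<open>k \<le> m\<close> unfolding j_def by simp
    have "(par ^^ m) i = (par ^^ j) (par c)" using that(1)
      unfolding j funpow_add funpow_Suc_right by simp
    also have "\<dots> = 0" using that(5)[unfolded rts_def] by (simp add: pow0)
    finally show ?thesis using that(2,3) unfolding rts_def by auto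
  qed
  show ?thesis
  proof (cases "k \<le> m")
    case True then show ?thesis using *[of k c m c'] assms by simp
  next
    case False then show ?thesis using *[of m c' k c] assms by simp
  qed
qed

lemma exist: "i \<in> {1..n} \<Longrightarrow> \<exists>c\<in>rts n par. i \<in> blk n par c"
proof (induction i rule: less_induct)
  case (less i)
  show ?case
  proof (cases "par i = 0")
    case True
    then have "i \<in> rts n par" using less.prems by (simp add: rts_def)
    moreover have "(par ^^ 0) i = i" by simp
    then have "i \<in> blk n par i" using less.prems unfolding blk_def by blast
    ultimately show ?thesis by blast
  next
    case False
    have "par i < i" using par_lt[OF less.prems] .
    moreover have "par i \<in> {1..n}" using False par_le_n[of i] by simp
    ultimately have "\<exists>c\<in>rts n par. par i \<in> blk n par c" using less.IH by blast
    then obtain c k where c: "c \<in> rts n par" "(par ^^ k) (par i) = c"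
      unfolding blk_def by auto
    then have "(par ^^ Suc k) i = c" unfolding funpow_Suc_right by simp
    then show ?thesis using c less.prems unfolding blk_def by blast
  qed
qed

lemma self_blk: "c \<in> rts n par \<Longrightarrow> c \<in> blk n par c"
proof -
  assume "c \<in> rts n par"
  moreover have "(par ^^ 0) c = c" by simp
  ultimately show ?thesis unfolding rts_def blk_def by blast
qed

lemma blk_sub: "blk n par c \<subseteq> {1..n}" unfolding blk_def by auto

lemma blk_unique: "c \<in> rts n par \<Longrightarrow> c' \<in> rts n par \<Longrightarrow> i \<in> blk n par c \<Longrightarrow> i \<in> blk n par c' \<Longrightarrow> c = c'"
proof -
  assume a: "c \<in> rts n par" "c' \<in> rts n par" "i \<in> blk n par c" "i \<in> blk n par c'"
  then obtain k m where "(par ^^ k) i = c" "(par ^^ m) i = c'" unfolding blk_def by auto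
  then show "c = c'" using uniq a(1,2) by blast
qed

lemma blk_inj: "inj_on (blk n par) (rts n par)"
proof (intro inj_onI)
  fix c c' assume a: "c \<in> rts n par" "c' \<in> rts n par" "blk n par c = blk n par c'"
  then have "c \<in> blk n par c'" using self_blk[OF a(1)] by simp
  then show "c = c'" using blk_unique[OF a(1,2) self_blk[OF a(1)]] by simp
qed

lemma blk_union: "\<Union> (blk n par ` rts n par) = {1..n}"
proof
  show "\<Union> (blk n par ` rts n par) \<subseteq> {1..n}" using blk_sub by blast
  show "{1..n} \<subseteq> \<Union> (blk n par ` rts n par)"
  proof
    fix i assume "i \<in> {1..n}"
    from exist[OF this] obtain c where "c \<in> rts n par" "i \<in> blk n par c" by blast
    then show "i \<in> \<Union> (blk n par ` rts n par)" by blast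
  qed
qed

lemma finite_rts: "finite (rts n par)" unfolding rts_def by auto

lemma card_ind: "finite I \<Longrightarrow> card {i\<in>I. P i} = (\<Sum>i\<in>I. if P i then 1 else 0)"
  by (simp add: sum.If_cases Int_def)

lemma card_fiber:
  fixes f :: "nat \<Rightarrow> nat"
  assumes "finite I" "finite S"
  shows "(\<Sum>v\<in>S. card {i\<in>I. f i = v}) = card {i\<in>I. f i \<in> S}"
proof -
  have "(\<Sum>v\<in>S. card {i\<in>I. f i = v}) = (\<Sum>v\<in>S. \<Sum>i\<in>I. if f i = v then 1 else 0)"
    using assms by (simp add: card_ind)
  also have "\<dots> = (\<Sum>i\<in>I. \<Sum>v\<in>S. if f i = v then 1 else 0)" by (rule sum.swap)
  also have "\<dots> = (\<Sum>i\<in>I. if f i \<in> S then 1 else 0)"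
    using assms by (simp add: sum.delta')
  also have "\<dots> = card {i\<in>I. f i \<in> S}" using assms by (simp add: card_ind)
  finally show ?thesis .
qed

lemma outdeg_sum_all: "sum (outdeg n par) {0..n} = n"
proof -
  have "sum (outdeg n par) {0..n} = card {i\<in>{1..n}. par i \<in> {0..n}}"
    unfolding outdeg_def by (rule card_fiber) auto
  also have "{i\<in>{1..n}. par i \<in> {0..n}} = {1..n}" using par_le_n by auto
  finally show ?thesis by simp
qed

lemma outdeg_root: "outdeg n par 0 = card (branch_partition n par)"
proof -
  have "card (branch_partition n par) = card (rts n par)"
    unfolding bp_eq by (rule card_image[OF blk_inj])
  then show ?thesis unfolding outdeg_def rts_def by simp
qed

lemma pred_blk:
  assumes c: "c \<in> rts n par"
  shows "{i\<in>{1..n}. par i \<in> blk n par c} = blk n par c - {c}"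
proof (intro set_eqI iffI)
  fix i assume "i \<in> {i\<in>{1..n}. par i \<in> blk n par c}"
  then have i: "i \<in> {1..n}" "par i \<in> blk n par c" by auto
  then obtain k where "(par ^^ k) (par i) = c" unfolding blk_def by auto
  then have "(par ^^ Suc k) i = c" unfolding funpow_Suc_right by simp
  then have "i \<in> blk n par c" using i unfolding blk_def by blast
  moreover have "i \<noteq> c" using i c unfolding rts_def blk_def by auto
  ultimately show "i \<in> blk n par c - {c}" by blast
next
  fix i assume "i \<in> blk n par c - {c}"
  then have i: "i \<in> blk n par c" "i \<noteq> c" by auto
  then have i1: "i \<in> {1..n}" unfolding blk_def by auto
  from i obtain k where k: "(par ^^ k) i = c" unfolding blk_def by auto
  with i obtain j where "k = Suc j" by (cases k) auto
  with k have kk: "(par ^^ j) (par i) = c" by (simp add: funpow_swap1)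
  have "par i \<noteq> 0"
  proof
    assume "par i = 0"
    then have "c = 0" using kk pow0[of j] by simp
    then show False using c unfolding rts_def by simp
  qed
  then have "par i \<in> blk n par c" using kk par_le_n unfolding blk_def by auto
  then show "i \<in> {i\<in>{1..n}. par i \<in> blk n par c}" using i1 by blast
qed

lemma outdeg_blk:
  assumes c: "c \<in> rts n par"
  shows "real (sum (outdeg n par) (blk n par c)) = real (card (blk n par c)) - 1"
proof -
  have "sum (outdeg n par) (blk n par c) = card {i\<in>{1..n}. par i \<in> blk n par c}"
    unfolding outdeg_def by (rule card_fiber) (auto simp: blk_def)
  also have "\<dots> = card (blk n par c) - 1"
    unfolding pred_blk[OF c] using self_blk[OF c] by (simp add: blk_def)
  finally have e: "sum (outdeg n par) (blk n par c) = card (blk n par c) - 1" .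
  have fin: "finite (blk n par c)" using blk_sub[of c] finite_subset by blast
  have "card (blk n par c) \<noteq> 0" using self_blk[OF c] fin by auto
  then show ?thesis unfolding e by (simp add: of_nat_diff)
qed

end



context
  fixes n par v assumes T: "tok n par" and v: "v \<le> n"
begin

lemma step_tok: "tok (Suc n) (par(Suc n := v))"
  unfolding tok_def
proof (intro allI)
  fix i show "if i \<in> {1..Suc n} then (par(Suc n := v)) i < i else (par(Suc n := v)) i = 0"
  proof (cases "i = Suc n")
    case True then show ?thesis using v by simp
  next
    case False
    then show ?thesis using tokD1[OF T, of i] tokD2[OF T, of i] by auto
  qed
qed

lemma step_pow: "i \<le> n \<Longrightarrow> ((par(Suc n := v)) ^^ k) i = (par ^^ k) i"
proof (induction k)
  case (Suc k)
  have "(par ^^ k) i \<le> n" using pow_le[OF T, of k i] Suc.prems by simp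
  then show ?case using Suc by simp
qed simp

lemma step_pow_new: "((par(Suc n := v)) ^^ Suc k) (Suc n) = (par ^^ k) v"
proof -
  have "((par(Suc n := v)) ^^ Suc k) (Suc n) = ((par(Suc n := v)) ^^ k) ((par(Suc n := v)) (Suc n))"
    by (simp only: funpow_Suc_right comp_def)
  also have "\<dots> = (par ^^ k) v" using step_pow[OF v] by simp
  finally show ?thesis .
qed

lemma step_rts: "rts (Suc n) (par(Suc n := v)) = (if v = 0 then insert (Suc n) (rts n par) else rts n par)"
  unfolding rts_def by auto

lemma step_blk:
  assumes c: "c \<in> {1..n}"
  shows "blk (Suc n) (par(Suc n := v)) c = blk n par c \<union> (if v \<in> blk n par c then {Suc n} else {})"
proof (intro set_eqI)
  fix i
  show "i \<in> blk (Suc n) (par(Suc n := v)) c \<longleftrightarrow> i \<in> blk n par c \<union> (if v \<in> blk n par c then {Suc n} else {})"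
  proof (cases "i \<le> n")
    case True
    then show ?thesis unfolding blk_def by (simp add: step_pow[OF True])
  next
    case False
    show ?thesis
    proof (cases "i = Suc n")
      case False
      with \<open>\<not> i \<le> n\<close> show ?thesis unfolding blk_def by auto
    next
      case True
      have "(\<exists>k. ((par(Suc n := v)) ^^ k) (Suc n) = c) \<longleftrightarrow> (\<exists>k. (par ^^ k) v = c)"
      proof
        assume "\<exists>k. ((par(Suc n := v)) ^^ k) (Suc n) = c"
        then obtain k where k: "((par(Suc n := v)) ^^ k) (Suc n) = c" by blast
        then obtain j where "k = Suc j" using c by (cases k) auto
        then show "\<exists>k. (par ^^ k) v = c" using k step_pow_new by auto
      next
        assume "\<exists>k. (par ^^ k) v = c"
        then obtain k where "(par ^^ k) v = c" by blast
        then show "\<exists>k. ((par(Suc n := v)) ^^ k) (Suc n) = c" using step_pow_new by blast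
      qed
      moreover have "(\<exists>k. (par ^^ k) v = c) \<longleftrightarrow> v \<in> blk n par c"
        using c pow0[OF T] v unfolding blk_def by (cases "v = 0") auto
      ultimately have "(\<exists>k. ((par(Suc n := v)) ^^ k) (Suc n) = c) \<longleftrightarrow> v \<in> blk n par c" by simp
      moreover have "Suc n \<notin> blk n par c" unfolding blk_def by simp
      ultimately show ?thesis unfolding True by (simp add: blk_def[of "Suc n"])
    qed
  qed
qed

lemma step_blk_new:
  assumes "v = 0"
  shows "blk (Suc n) (par(Suc n := v)) (Suc n) = {Suc n}"
proof (intro set_eqI iffI)
  fix i assume i: "i \<in> blk (Suc n) (par(Suc n := v)) (Suc n)"
  then obtain k where k: "((par(Suc n := v)) ^^ k) i = Suc n" and i1: "i \<in> {1..Suc n}"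
    unfolding blk_def by auto
  show "i \<in> {Suc n}"
  proof (rule ccontr)
    assume "i \<notin> {Suc n}"
    then have "i \<le> n" using i1 by auto
    then have "((par(Suc n := v)) ^^ k) i \<le> n" using step_pow[of i k] pow_le[OF T, of k i] by simp
    then show False using k by simp
  qed
next
  fix i assume "i \<in> {Suc n}"
  then have i: "i = Suc n" by simp
  have "((par(Suc n := v)) ^^ 0) (Suc n) = Suc n" by simp
  then have "\<exists>k. ((par(Suc n := v)) ^^ k) (Suc n) = Suc n" by blast
  then show "i \<in> blk (Suc n) (par(Suc n := v)) (Suc n)" unfolding blk_def i by simp
qed

lemma step_bp0:
  assumes "v = 0"
  shows "branch_partition (Suc n) (par(Suc n := v)) = insert {Suc n} (branch_partition n par)"
proof -
  have "branch_partition (Suc n) (par(Suc n := v)) = blk (Suc n) (par(Suc n := v)) ` insert (Suc n) (rts n par)"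
    unfolding bp_eq step_rts using assms by simp
  also have "\<dots> = insert {Suc n} (blk (Suc n) (par(Suc n := v)) ` rts n par)"
    using step_blk_new[OF assms] by simp
  also have "blk (Suc n) (par(Suc n := v)) ` rts n par = blk n par ` rts n par"
  proof (intro image_cong refl)
    fix c assume "c \<in> rts n par"
    then have "c \<in> {1..n}" unfolding rts_def by auto
    moreover have "v \<notin> blk n par c" using assms unfolding blk_def by auto
    ultimately show "blk (Suc n) (par(Suc n := v)) c = blk n par c" using step_blk by simp
  qed
  finally show ?thesis unfolding bp_eq .
qed

lemma step_bp1:
  assumes c0: "c0 \<in> rts n par" and vc: "v \<in> blk n par c0"
  shows "branch_partition (Suc n) (par(Suc n := v))
        = insert (insert (Suc n) (blk n par c0)) (branch_partition n par - {blk n par c0})"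
proof -
  have v0: "v \<noteq> 0" using vc unfolding blk_def by auto
  have "branch_partition (Suc n) (par(Suc n := v)) = blk (Suc n) (par(Suc n := v)) ` rts n par"
    unfolding bp_eq step_rts using v0 by simp
  also have "\<dots> = (\<lambda>c. if c = c0 then insert (Suc n) (blk n par c0) else blk n par c) ` rts n par"
  proof (intro image_cong refl)
    fix c assume c: "c \<in> rts n par"
    then have "c \<in> {1..n}" unfolding rts_def by auto
    moreover have "v \<in> blk n par c \<longleftrightarrow> c = c0" using blk_unique[OF T c c0 _ vc] vc by auto
    ultimately show "blk (Suc n) (par(Suc n := v)) c = (if c = c0 then insert (Suc n) (blk n par c0) else blk n par c)"
      using step_blk by auto
  qed
  also have "\<dots> = insert (insert (Suc n) (blk n par c0)) (blk n par ` (rts n par - {c0}))"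
    using c0 by auto
  also have "blk n par ` (rts n par - {c0}) = blk n par ` rts n par - {blk n par c0}"
    using inj_on_image_set_diff[OF blk_inj[OF T], of "{c0}"] c0 by auto
  finally show ?thesis unfolding bp_eq .
qed

end



definition tw :: "real \<Rightarrow> real \<Rightarrow> nat \<Rightarrow> (nat \<Rightarrow> nat) \<Rightarrow> nat \<Rightarrow> real" where
  "tw \<alpha> \<beta> n par v = (real (outdeg n par v) + (if v = 0 then \<beta> else \<alpha>)) / (\<beta> + (\<alpha> + 1) * real n)"

lemma tree_step_wsum: "tree_step \<alpha> \<beta> n par = embed_pmf (wsum (\<lambda>v. par(Suc n := v)) (tw \<alpha> \<beta> n par) {0..n})"
  unfolding tree_step_def tree_step_density_def wsum_def tw_def by simp

lemma real_arith1:
  fixes x \<alpha> \<beta> r :: real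
  assumes "\<alpha> > 0" "\<beta> > 0" "r \<ge> 0"
  shows "(x - 1 + \<alpha> * x) / (\<beta> + (\<alpha> + 1) * r) = (x - 1 / (1 + \<alpha>)) / (r + \<beta> / (1 + \<alpha>))"
proof -
  have p: "1 + \<alpha> \<noteq> 0" using assms by simp
  have e1: "x - 1 / (1 + \<alpha>) = (x * (1 + \<alpha>) - 1) / (1 + \<alpha>)" using p by (simp add: field_simps)
  have e2: "r + \<beta> / (1 + \<alpha>) = (r * (1 + \<alpha>) + \<beta>) / (1 + \<alpha>)" using p by (simp add: field_simps)
  have "(x - 1 / (1 + \<alpha>)) / (r + \<beta> / (1 + \<alpha>)) = (x * (1 + \<alpha>) - 1) / (r * (1 + \<alpha>) + \<beta>)"
    unfolding e1 e2 using p by simp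
  also have "\<dots> = (x - 1 + \<alpha> * x) / (\<beta> + (\<alpha> + 1) * r)" by (simp add: algebra_simps)
  finally show ?thesis by simp
qed

lemma real_arith2:
  fixes x \<alpha> \<beta> r :: real
  assumes "\<alpha> > 0" "\<beta> > 0" "r \<ge> 0"
  shows "(x + \<beta>) / (\<beta> + (\<alpha> + 1) * r) = (\<beta> / (1 + \<alpha>) + x / (1 + \<alpha>)) / (r + \<beta> / (1 + \<alpha>))"
proof -
  have p: "1 + \<alpha> \<noteq> 0" using assms by simp
  have e1: "\<beta> / (1 + \<alpha>) + x / (1 + \<alpha>) = (x + \<beta>) / (1 + \<alpha>)" by (simp add: add_divide_distrib)
  have e2: "r + \<beta> / (1 + \<alpha>) = (r * (1 + \<alpha>) + \<beta>) / (1 + \<alpha>)" using p by (simp add: field_simps)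
  have "(\<beta> / (1 + \<alpha>) + x / (1 + \<alpha>)) / (r + \<beta> / (1 + \<alpha>)) = (x + \<beta>) / (r * (1 + \<alpha>) + \<beta>)"
    unfolding e1 e2 using p by simp
  also have "\<dots> = (x + \<beta>) / (\<beta> + (\<alpha> + 1) * r)" by (simp add: algebra_simps)
  finally show ?thesis by simp
qed

context
  fixes n par and \<alpha> \<beta> :: real assumes T: "tok n par" and a: "\<alpha> > 0" and b: "\<beta> > 0"
begin

lemma den_pos: "\<beta> + (\<alpha> + 1) * real n > 0" using a b by (simp add: add_pos_nonneg)

lemma tw_nonneg: "tw \<alpha> \<beta> n par v \<ge> 0"
  unfolding tw_def using den_pos a b by (intro divide_nonneg_pos) auto

lemma tw_sum: "sum (tw \<alpha> \<beta> n par) {0..n} = 1"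
proof -
  have s1: "(\<Sum>v\<in>{0..n}. (if v = 0 then \<beta> else \<alpha>)) = \<beta> + real n * \<alpha>"
  proof -
    have "{0..n} = insert 0 {1..n}" by auto
    then have "(\<Sum>v\<in>{0..n}. (if v = 0 then \<beta> else \<alpha>)) = \<beta> + (\<Sum>v\<in>{1..n}. (if v = 0 then \<beta> else \<alpha>))"
      by simp
    also have "(\<Sum>v\<in>{1..n}. (if v = 0 then \<beta> else \<alpha>)) = (\<Sum>v\<in>{1..n}. \<alpha>)" by (intro sum.cong) auto
    finally show ?thesis by simp
  qed
  have "sum (tw \<alpha> \<beta> n par) {0..n} = (\<Sum>v\<in>{0..n}. real (outdeg n par v) + (if v = 0 then \<beta> else \<alpha>)) / (\<beta> + (\<alpha> + 1) * real n)"
    unfolding tw_def by (simp add: sum_divide_distrib)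
  also have "\<dots> = (real n + \<beta> + real n * \<alpha>) / (\<beta> + (\<alpha> + 1) * real n)"
    unfolding sum.distrib s1 of_nat_sum[symmetric] outdeg_sum_all[OF T] by simp
  also have "\<dots> = 1" using den_pos by (simp add: field_simps)
  finally show ?thesis .
qed

lemma tw_blk:
  assumes c: "c \<in> rts n par"
  shows "sum (tw \<alpha> \<beta> n par) (blk n par c) = (real (card (blk n par c)) - 1 + \<alpha> * real (card (blk n par c))) / (\<beta> + (\<alpha> + 1) * real n)"
proof -
  have "sum (tw \<alpha> \<beta> n par) (blk n par c) = (\<Sum>v\<in>blk n par c. real (outdeg n par v) + \<alpha>) / (\<beta> + (\<alpha> + 1) * real n)"
    unfolding tw_def sum_divide_distrib by (intro sum.cong refl) (auto simp: blk_def)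
  also have "(\<Sum>v\<in>blk n par c. real (outdeg n par v) + \<alpha>) = real (sum (outdeg n par) (blk n par c)) + \<alpha> * real (card (blk n par c))"
    by (simp add: sum.distrib)
  finally show ?thesis unfolding outdeg_blk[OF T c] .
qed

lemma density_eq:
  "wsum (\<lambda>v. branch_partition (Suc n) (par(Suc n := v))) (tw \<alpha> \<beta> n par) {0..n}
   = crp_step_density (1 / (1 + \<alpha>)) (\<beta> / (1 + \<alpha>)) n (branch_partition n par)"
proof
  fix Q
  let ?P = "branch_partition n par"
  let ?H = "\<lambda>t. insert (insert (Suc n) t) (?P - {t})"
  let ?g = "\<lambda>v. if Q = branch_partition (Suc n) (par(Suc n := v)) then tw \<alpha> \<beta> n par v else 0"
  have fin: "\<And>c. finite (blk n par c)" using blk_sub[OF T] finite_subset by blast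
  have "{0..n} = insert 0 (\<Union> (blk n par ` rts n par))" using blk_union[OF T] by auto
  then have "wsum (\<lambda>v. branch_partition (Suc n) (par(Suc n := v))) (tw \<alpha> \<beta> n par) {0..n} Q
     = ?g 0 + sum ?g (\<Union> (blk n par ` rts n par))"
    unfolding wsum_def using blk_union[OF T] by simp
  also have "sum ?g (\<Union> (blk n par ` rts n par)) = (\<Sum>c\<in>rts n par. sum ?g (blk n par c))"
    by (rule sum.UNION_disjoint) (use finite_rts[OF T] fin blk_unique[OF T] in blast)+
  also have "\<dots> = (\<Sum>c\<in>rts n par. if Q = ?H (blk n par c) then (real (card (blk n par c)) - 1 / (1 + \<alpha>)) / (real n + \<beta> / (1 + \<alpha>)) else 0)"
  proof (intro sum.cong refl)
    fix c assume c: "c \<in> rts n par"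
    have "sum ?g (blk n par c) = (\<Sum>v\<in>blk n par c. if Q = ?H (blk n par c) then tw \<alpha> \<beta> n par v else 0)"
    proof (intro sum.cong refl)
      fix v assume v: "v \<in> blk n par c"
      then have "v \<le> n" unfolding blk_def by auto
      then show "?g v = (if Q = ?H (blk n par c) then tw \<alpha> \<beta> n par v else 0)"
        using step_bp1[OF T _ c v] by simp
    qed
    also have "\<dots> = (if Q = ?H (blk n par c) then sum (tw \<alpha> \<beta> n par) (blk n par c) else 0)"
      by simp
    also have "\<dots> = (if Q = ?H (blk n par c) then (real (card (blk n par c)) - 1 / (1 + \<alpha>)) / (real n + \<beta> / (1 + \<alpha>)) else 0)"
      unfolding tw_blk[OF c] real_arith1[OF a b of_nat_0_le_iff] ..
    finally show "sum ?g (blk n par c) = \<dots>" .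
  qed
  also have "\<dots> = (\<Sum>t\<in>?P. if Q = ?H t then (real (card t) - 1 / (1 + \<alpha>)) / (real n + \<beta> / (1 + \<alpha>)) else 0)"
    unfolding bp_eq sum.reindex[OF blk_inj[OF T]] by (simp add: comp_def)
  also have "?g 0 = (if Q = insert {Suc n} ?P then (\<beta> / (1 + \<alpha>) + real (card ?P) / (1 + \<alpha>)) / (real n + \<beta> / (1 + \<alpha>)) else 0)"
    using step_bp0[OF T, of 0] real_arith2[OF a b of_nat_0_le_iff, of "real (card ?P)"]
    unfolding tw_def outdeg_root[OF T] by simp
  finally have calc: "wsum (\<lambda>v. branch_partition (Suc n) (par(Suc n := v))) (tw \<alpha> \<beta> n par) {0..n} Q
   = (if Q = insert {Suc n} ?P then (\<beta> / (1 + \<alpha>) + real (card ?P) / (1 + \<alpha>)) / (real n + \<beta> / (1 + \<alpha>)) else 0)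
     + (\<Sum>t\<in>?P. if Q = ?H t then (real (card t) - 1 / (1 + \<alpha>)) / (real n + \<beta> / (1 + \<alpha>)) else 0)" .
  show "wsum (\<lambda>v. branch_partition (Suc n) (par(Suc n := v))) (tw \<alpha> \<beta> n par) {0..n} Q
   = crp_step_density (1 / (1 + \<alpha>)) (\<beta> / (1 + \<alpha>)) n ?P Q"
    unfolding crp_step_density_def times_divide_eq_right mult_1_right using calc by linarith
qed

lemma key: "map_pmf (branch_partition (Suc n)) (tree_step \<alpha> \<beta> n par)
   = crp_step (1 / (1 + \<alpha>)) (\<beta> / (1 + \<alpha>)) n (branch_partition n par)"
  unfolding tree_step_wsum wsum_map[OF finite_atLeastAtMost tw_nonneg tw_sum] crp_step_def
  by (simp add: comp_def density_eq)

lemma support: "set_pmf (tree_step \<alpha> \<beta> n par) \<subseteq> (\<lambda>v. par(Suc n := v)) ` {0..n}"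
  unfolding tree_step_wsum by (rule wsum_set[OF finite_atLeastAtMost tw_nonneg tw_sum])

end



lemma growth_tok:
  fixes \<alpha> \<beta> :: real
  assumes a: "\<alpha> > 0" and b: "\<beta> > 0"
  shows "par \<in> set_pmf (growth \<alpha> \<beta> n) \<Longrightarrow> tok n par"
proof (induction n arbitrary: par)
  case 0
  then show ?case unfolding tok_def by simp
next
  case (Suc n)
  then obtain p0 where p0: "p0 \<in> set_pmf (growth \<alpha> \<beta> n)" "par \<in> set_pmf (tree_step \<alpha> \<beta> n p0)"
    by auto
  have T: "tok n p0" using Suc.IH[OF p0(1)] .
  then obtain v where v: "v \<in> {0..n}" and eq: "par = p0(Suc n := v)" using support[OF T a b] p0(2) by blast
  show ?case unfolding eq by (rule step_tok[OF T]) (use v in simp)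
qed

theorem proposition3:
  fixes \<alpha> \<beta> :: real and n :: nat
  assumes "\<alpha> > 0" and "\<beta> > 0" and "n \<ge> 1"
  shows "map_pmf (branch_partition n) (growth \<alpha> \<beta> n)
           = crp (1 / (1 + \<alpha>)) (\<beta> / (1 + \<alpha>)) n"
proof -
  have main: "map_pmf (branch_partition (Suc m)) (growth \<alpha> \<beta> (Suc m))
           = crp (1 / (1 + \<alpha>)) (\<beta> / (1 + \<alpha>)) (Suc m)" for m
  proof (induction m)
    case 0
    have T0: "tok 0 (\<lambda>_. 0)" unfolding tok_def by simp
    have eq: "map_pmf (branch_partition 1) (growth \<alpha> \<beta> 1)
        = map_pmf (branch_partition 1) (tree_step \<alpha> \<beta> 0 (\<lambda>_. 0))"
      by (simp add: map_bind_pmf bind_return_pmf)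
    have "set_pmf (map_pmf (branch_partition 1) (tree_step \<alpha> \<beta> 0 (\<lambda>_. 0))) \<subseteq> {{{1}}}"
    proof -
      have "set_pmf (tree_step \<alpha> \<beta> 0 (\<lambda>_. 0)) \<subseteq> {(\<lambda>_. 0)(1 := 0)}"
        using support[OF T0 assms(1,2)] by simp
      moreover have "branch_partition 1 ((\<lambda>_. 0)(1 := 0)) = {{1}}"
      proof -
        have r: "rts 1 (\<lambda>_. 0) = {1}" unfolding rts_def by auto
        have T1: "tok 1 (\<lambda>_. 0)" unfolding tok_def by simp
        have "1 \<in> blk 1 (\<lambda>_. 0) 1" using self_blk[OF T1, of 1] r by simp
        moreover have "blk 1 (\<lambda>_. 0) 1 \<subseteq> {1}" using blk_sub[OF T1, of 1] by simp
        ultimately have b1: "blk 1 (\<lambda>_. 0) 1 = {1}" by blast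
        have e: "((\<lambda>_. 0::nat)(1 := 0)) = (\<lambda>_. 0)" by (rule ext) simp
        show ?thesis unfolding e bp_eq r using b1 by simp
      qed
      ultimately show ?thesis by auto
    qed
    then have "map_pmf (branch_partition 1) (tree_step \<alpha> \<beta> 0 (\<lambda>_. 0)) = return_pmf {{1}}"
      by (simp only: set_pmf_subset_singleton)
    then have "map_pmf (branch_partition 1) (growth \<alpha> \<beta> 1) = return_pmf {{1}}"
      using eq by simp
    then show ?case by simp
  next
    case (Suc m)
    let ?a = "1 / (1 + \<alpha>)" and ?t = "\<beta> / (1 + \<alpha>)"
    have "map_pmf (branch_partition (Suc (Suc m))) (growth \<alpha> \<beta> (Suc (Suc m)))
        = growth \<alpha> \<beta> (Suc m) \<bind> (\<lambda>p. map_pmf (branch_partition (Suc (Suc m))) (tree_step \<alpha> \<beta> (Suc m) p))"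
      by (simp add: map_bind_pmf)
    also have "\<dots> = growth \<alpha> \<beta> (Suc m) \<bind> (\<lambda>p. crp_step ?a ?t (Suc m) (branch_partition (Suc m) p))"
      by (intro bind_pmf_cong refl key growth_tok[OF assms(1,2)] assms(1,2))
    also have "\<dots> = map_pmf (branch_partition (Suc m)) (growth \<alpha> \<beta> (Suc m)) \<bind> crp_step ?a ?t (Suc m)"
      by (simp add: bind_map_pmf)
    also have "\<dots> = crp ?a ?t (Suc (Suc m))" using Suc.IH by simp
    finally show ?case .
  qed
  obtain m where "n = Suc m" using assms(3) by (cases n) auto
  then show ?thesis using main by simp
qed


end
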